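(* For every integer $s\ge3$, $F_{s,4}(x)=\frac{1}{(s-1)!}\bigl(x^2-(6s-1)x+6s^2\bigr)\prod_{p=4}^{s}(x-p)$ (an empty product equals $1$).
   Context: For an integer $j\ge0$, $\binom{x}{j}=x(x-1)\cdots(x-j+1)/j!$ as a polynomial in $x$, and $\binom{x}{j}=0$ for $j<0$. For integers $s\ge1$, $k\ge1$, the Moser polynomial is $F_{s,k}(x)=\sum_{p=1}^{s}(-1)^{p-1}p^{k-1}\binom{x}{s-p}$. *)

theory Defs
  imports "HOL-Computational_Algebra.Polynomial"
begin

definition binom_poly :: "int \<Rightarrow> 'a::field_char_0 poly" where
  "binom_poly j = (if j < 0 then 0
     else smult (1 / fact (nat j)) (\<Prod>i<nat j. [:- of_nat i, 1:]))"

definition moser_poly :: "nat \<Rightarrow> nat \<Rightarrow> 'a::field_char_0 poly" where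
  "moser_poly s k = (\<Sum>p=1..s. smult ((-1) ^ (p - 1) * of_nat p ^ (k - 1))
                                   (binom_poly (int s - int p)))"

end

theory Submission imports Defs begin

definition FF :: "nat \<Rightarrow> nat \<Rightarrow> int" where
 "FF s n = (\<Sum>p=1..s. (-1)^(p-1) * int p^3 * int (n choose (s-p)))"
definition PP :: "nat \<Rightarrow> nat \<Rightarrow> int" where
 "PP s n = (int n^2 - (6*int s - 1)*int n + 6*int s^2) * (\<Prod>p=4..s. int n - int p)"

lemma FF_rec: "FF (Suc s) (Suc n) = FF (Suc s) n + FF s n"
proof -
  have "FF (Suc s) (Suc n) = (\<Sum>p=1..s. (-1)^(p-1) * int p^3 * int (Suc n choose (Suc s-p))) + (-1)^s * int (Suc s)^3"
    unfolding FF_def by (simp add: sum.cl_ivl_Suc)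
  also have "(\<Sum>p=1..s. (-1)^(p-1) * int p^3 * int (Suc n choose (Suc s-p))) =
     (\<Sum>p=1..s. (-1)^(p-1) * int p^3 * int (n choose (Suc s-p))) + FF s n"
    unfolding FF_def sum.distrib[symmetric]
    by (rule sum.cong) (auto simp: Suc_diff_le algebra_simps)
  finally show ?thesis unfolding FF_def by (simp add: sum.cl_ivl_Suc)
qed

lemma FF_0: "s \<ge> 1 \<Longrightarrow> FF s 0 = (-1)^(s-1) * int s^3"
  unfolding FF_def
  by (subst sum.mono_neutral_cong_right[of "{1..s}" "{s}"]) auto

lemma prod_shift: "s \<ge> 3 \<Longrightarrow> (\<Prod>p=4..Suc s. int (Suc n) - int p) = (int n - 3) * (\<Prod>p=4..s. int n - int p)"
proof -
  assume s: "s \<ge> 3"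
  have 4: "(4::nat) = Suc 3" by simp
  have "(\<Prod>p=4..Suc s. int (Suc n) - int p) = (\<Prod>p=3..s. int (Suc n) - int (Suc p))"
    unfolding 4 by (rule prod.shift_bounds_cl_Suc_ivl)
  also have "\<dots> = (\<Prod>p=3..s. int n - int p)" by simp
  also have "\<dots> = (int n - 3) * (\<Prod>p=Suc 3..s. int n - int p)"
    using s by (subst prod.atLeast_Suc_atMost) auto
  finally show ?thesis unfolding 4 .
qed

lemma prod_0: "s \<ge> 3 \<Longrightarrow> 6 * (\<Prod>p=4..s. - int p) = (-1)^(s-3) * int (fact s)"
proof (induction s rule: dec_induct)
  case base then show ?case by (simp add: fact_numeral)
next
  case (step m)
  have e: "(\<Prod>p=4..Suc m. - int p) = - int (Suc m) * (\<Prod>p=4..m. -int p)"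
    using step.hyps by (simp add: prod.cl_ivl_Suc)
  have e2: "(-1::int)^(Suc m - 3) = - ((-1)^(m-3))"
  proof -
    obtain k where "m = k + 3" using step.hyps le_Suc_ex by (metis add.commute)
    then show ?thesis by simp
  qed
  show ?case unfolding e e2 using step.IH
    by (simp only: fact_Suc of_nat_mult mult.assoc mult.left_commute[of 6]) (simp add: algebra_simps)
qed

lemma alg: "(int n^2 - (6*int (Suc s) - 1)*int n + 6*int (Suc s)^2) * ((int n - int (Suc s)) * Q) + int s * ((int n^2 - (6*int s - 1)*int n + 6*int s^2) * Q) = (int (Suc n)^2 - (6*int (Suc s) - 1)*int (Suc n) + 6*int (Suc s)^2) * ((int n - 3) * Q)"
  by (simp add: algebra_simps power2_eq_square)

lemma main_int: "s \<ge> 3 \<Longrightarrow> int (fact (s-1)) * FF s n = PP s n"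
proof (induction s arbitrary: n rule: dec_induct)
  case base
  show ?case
  proof -
    have "FF 3 n = int (n choose Suc (Suc 0)) - 8 * int n + 27"
      by (simp add: FF_def numeral_3_eq_3 sum.cl_ivl_Suc)
    moreover have "2 * int (n choose Suc (Suc 0)) = int n * (int n - 1)"
      by (induction n) (auto simp: algebra_simps)
    ultimately show ?thesis
      by (simp add: PP_def fact_numeral power2_eq_square algebra_simps)
  qed
next
  case (step s)
  show ?case
  proof (induction n)
    case 0
    have "PP (Suc s) 0 = 6 * int (Suc s)^2 * (\<Prod>p=4..Suc s. - int p)"
      by (simp add: PP_def)
    also have "\<dots> = int (Suc s)^2 * ((-1)^(Suc s-3) * int (fact (Suc s)))"
      using prod_0[of "Suc s"] step.hyps by simp
    moreover have "(-1::int)^s = (-1)^(s-2)"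
    proof -
      obtain k where "s = k + 3" using step.hyps le_Suc_ex by (metis add.commute)
      then show ?thesis by (simp add: power_add)
    qed
    ultimately show ?case using step.hyps
      by (simp add: FF_0 algebra_simps power2_eq_square power3_eq_cube)
  next
    case (Suc n)
    define Q where "Q = (\<Prod>p=4..s. int n - int p)"
    have f: "int (fact (Suc s - 1)) = int s * int (fact (s-1))"
      using step.hyps by (cases s) (auto simp: algebra_simps)
    have p1: "PP (Suc s) (Suc n) = (int (Suc n)^2 - (6*int (Suc s) - 1)*int (Suc n) + 6*int (Suc s)^2) * ((int n - 3) * Q)"
      unfolding PP_def Q_def using prod_shift[OF step.hyps(1)] by simp
    have p2: "PP (Suc s) n = (int n^2 - (6*int (Suc s) - 1)*int n + 6*int (Suc s)^2) * ((int n - int (Suc s)) * Q)"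
      unfolding PP_def Q_def using step.hyps by (simp add: prod.cl_ivl_Suc)
    have p3: "PP s n = (int n^2 - (6*int s - 1)*int n + 6*int s^2) * Q"
      unfolding PP_def Q_def by simp
    have IH: "int (fact s) * FF (Suc s) n = PP (Suc s) n" using Suc.IH by (simp only: diff_Suc_1)
    have f': "int (fact s) = int s * int (fact (s-1))" using f by (simp only: diff_Suc_1)
    have "int (fact (Suc s - 1)) * FF (Suc s) (Suc n) = int (fact s) * FF (Suc s) n + int (fact s) * FF s n"
      by (simp only: diff_Suc_1 FF_rec distrib_left)
    also have "\<dots> = PP (Suc s) n + int s * (int (fact (s-1)) * FF s n)"
      by (simp only: IH, simp only: f' mult.assoc)
    also have "\<dots> = PP (Suc s) n + int s * PP s n" using step.IH by simp
    also have "\<dots> = PP (Suc s) (Suc n)" unfolding p1 p2 p3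
      by (rule alg)
    finally show ?case .
  qed
qed

lemma poly_binom: "poly (binom_poly (int k) :: 'a::field_char_0 poly) x = x gchoose k"
  by (simp add: binom_poly_def poly_prod gbinomial_prod_rev atLeast0LessThan divide_inverse mult.commute)

lemma poly_moser: "poly (moser_poly s 4 :: 'a::field_char_0 poly) (of_nat n) = of_int (FF s n)"
  unfolding moser_poly_def FF_def poly_sum of_int_sum
  by (rule sum.cong) (auto simp: of_nat_diff[symmetric] poly_binom binomial_gbinomial simp del: of_nat_diff)

theorem mainTheorem7:
  fixes s :: nat
  assumes "s \<ge> 3"
  shows "(moser_poly s 4 :: 'a::field_char_0 poly) =
    smult (1 / fact (s - 1))
      ([: 6 * of_nat s ^ 2, - (6 * of_nat s - 1), 1 :] * (\<Prod>p=4..s. [:- of_nat p, 1:]))"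
proof -
  let ?R = "smult (1 / fact (s - 1))
      ([: 6 * of_nat s ^ 2, - (6 * of_nat s - 1), 1 :] * (\<Prod>p=4..s. [:- of_nat p, 1:])) :: 'a poly"
  have ev: "poly (moser_poly s 4 - ?R) (of_nat n) = 0" for n
  proof -
    have "poly ?R (of_nat n) = of_int (PP s n) / fact (s-1)"
      by (simp add: PP_def poly_prod divide_inverse algebra_simps power2_eq_square)
    also have "\<dots> = of_int (FF s n)"
      using arg_cong[OF main_int[OF assms, of n], of "of_int :: int \<Rightarrow> 'a"]
      by (simp add: field_simps)
    finally show ?thesis by (simp add: poly_moser)
  qed
  show ?thesis
  proof (rule ccontr)
    assume "moser_poly s 4 \<noteq> ?R"
    then have "finite {x. poly (moser_poly s 4 - ?R) x = 0}" by (intro poly_roots_finite) simp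
    moreover have "range (of_nat :: nat \<Rightarrow> 'a) \<subseteq> {x. poly (moser_poly s 4 - ?R) x = 0}"
      using ev by auto
    ultimately have "finite (range (of_nat :: nat \<Rightarrow> 'a))" by (rule finite_subset[rotated])
    moreover have "infinite (range (of_nat :: nat \<Rightarrow> 'a))"
      using range_inj_infinite[OF inj_of_nat] .
    ultimately show False by simp
  qed
qed
end
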